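(* Let $E$ be a separable real Hilbert space with $\dim E\geq 2$. For a measure $\mu\in\mathcal{W}_1(E)$ the following are equivalent: (i) $\mu$ is a Dirac measure; (ii) for every $\nu\in\mathcal{W}_1(E)$ with $\nu\neq\mu$ there exists $\eta\in\mathcal{W}_1(E)$ such that $d_{\mathcal{W}_1}(\mu,\nu)=d_{\mathcal{W}_1}(\nu,\eta)=\tfrac12 d_{\mathcal{W}_1}(\mu,\eta)$.
   Context: $\mathcal{W}_1(E)$ is the set of Borel probability measures $\mu$ on $E$ with $\int_E\|x\|\,d\mu(x)<\infty$, equipped with the distance $d_{\mathcal{W}_1}(\mu,\nu)=\inf_{\pi\in\Pi(\mu,\nu)}\int_{E\times E}\|x-y\|\,d\pi(x,y)$, where $\Pi(\mu,\nu)$ is the set of Borel probability measures on $E\times E$ with marginals $\mu$ and $\nu$. *)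

theory Defs
  imports "HOL-Probability.Probability"
begin

definition W1_space :: "'a::real_normed_vector measure set" where
  "W1_space = {\<mu>. sets \<mu> = sets borel \<and> prob_space \<mu> \<and>
                    (\<integral>\<^sup>+ x. ennreal (norm x) \<partial>\<mu>) < \<infinity>}"

definition couplings :: "'a::real_normed_vector measure \<Rightarrow> 'a measure \<Rightarrow> ('a \<times> 'a) measure set" where
  "couplings \<mu> \<nu> = {\<pi>. sets \<pi> = sets (borel \<Otimes>\<^sub>M borel) \<and> prob_space \<pi> \<and>
                        distr \<pi> borel fst = \<mu> \<and> distr \<pi> borel snd = \<nu>}"

definition W1_dist :: "'a::real_normed_vector measure \<Rightarrow> 'a measure \<Rightarrow> ennreal" where
  "W1_dist \<mu> \<nu> = (INF \<pi>\<in>couplings \<mu> \<nu>. \<integral>\<^sup>+ p. ennreal (norm (fst p - snd p)) \<partial>\<pi>)"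

end

theory Submission
  imports Defs
begin

lemma W1_return_left:
  fixes \<rho> :: "'a::{real_normed_vector, second_countable_topology} measure"
  assumes s: "sets \<rho> = sets borel" and p: "prob_space \<rho>"
  shows "W1_dist (return borel x) \<rho> = (\<integral>\<^sup>+z. ennreal (norm (x - z)) \<partial>\<rho>)"
proof -
  have sp: "space \<rho> = UNIV" using sets_eq_imp_space_eq[OF s] by simp
  have [measurable_cong]: "sets \<rho> = sets borel" by (fact s)
  have val: "(\<integral>\<^sup>+ p. ennreal (norm (fst p - snd p)) \<partial>\<pi>) = (\<integral>\<^sup>+z. ennreal (norm (x - z)) \<partial>\<rho>)"
    if "\<pi> \<in> couplings (return borel x) \<rho>" for \<pi>
  proof -
    have sp1: "sets \<pi> = sets (borel \<Otimes>\<^sub>M borel)" and d1: "distr \<pi> borel fst = return borel x"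
      and d2: "distr \<pi> borel snd = \<rho>" using that unfolding couplings_def by auto
    have [measurable_cong]: "sets \<pi> = sets (borel \<Otimes>\<^sub>M borel)" by (fact sp1)
    have "AE y in distr \<pi> borel fst. y = x" unfolding d1 by (simp add: AE_return)
    then have ae: "AE p in \<pi>. fst p = x"
      by (subst (asm) AE_distr_iff) auto
    have "(\<integral>\<^sup>+ p. ennreal (norm (fst p - snd p)) \<partial>\<pi>) = (\<integral>\<^sup>+ p. ennreal (norm (x - snd p)) \<partial>\<pi>)"
      by (rule nn_integral_cong_AE) (use ae in auto)
    also have "\<dots> = (\<integral>\<^sup>+ z. ennreal (norm (x - z)) \<partial>(distr \<pi> borel snd))"
      by (subst nn_integral_distr) auto
    finally show ?thesis unfolding d2 .
  qed
  define \<pi>0 where "\<pi>0 = distr \<rho> (borel \<Otimes>\<^sub>M borel) (\<lambda>z. (x, z))"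
  have "\<pi>0 \<in> couplings (return borel x) \<rho>"
    unfolding couplings_def
  proof (intro CollectI conjI)
    show "sets \<pi>0 = sets (borel \<Otimes>\<^sub>M borel)" unfolding \<pi>0_def by simp
    show "prob_space \<pi>0" unfolding \<pi>0_def by (rule prob_space.prob_space_distr[OF p]) auto
    have "distr \<pi>0 borel fst = distr \<rho> borel (\<lambda>z. x)" unfolding \<pi>0_def
      by (subst distr_distr) (auto simp: comp_def)
    also have "\<dots> = return borel x" by (rule prob_space.distr_const[OF p]) auto
    finally show "distr \<pi>0 borel fst = return borel x" .
    have "distr \<pi>0 borel snd = distr \<rho> borel (\<lambda>z. z)" unfolding \<pi>0_def
      by (subst distr_distr) (auto simp: comp_def)
    also have "\<dots> = \<rho>" by (rule distr_id2) (simp add: s)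
    finally show "distr \<pi>0 borel snd = \<rho>" .
  qed
  then show ?thesis unfolding W1_dist_def
    by (subst INF_cong[OF refl val]) (auto simp: INF_constant)
qed

lemma W1_return_right:
  fixes \<rho> :: "'a::{real_normed_vector, second_countable_topology} measure"
  assumes s: "sets \<rho> = sets borel" and p: "prob_space \<rho>"
  shows "W1_dist \<rho> (return borel x) = (\<integral>\<^sup>+z. ennreal (norm (z - x)) \<partial>\<rho>)"
proof -
  have sp: "space \<rho> = UNIV" using sets_eq_imp_space_eq[OF s] by simp
  have [measurable_cong]: "sets \<rho> = sets borel" by (fact s)
  have val: "(\<integral>\<^sup>+ p. ennreal (norm (fst p - snd p)) \<partial>\<pi>) = (\<integral>\<^sup>+z. ennreal (norm (z - x)) \<partial>\<rho>)"
    if "\<pi> \<in> couplings \<rho> (return borel x)" for \<pi>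
  proof -
    have sp1: "sets \<pi> = sets (borel \<Otimes>\<^sub>M borel)" and d1: "distr \<pi> borel snd = return borel x"
      and d2: "distr \<pi> borel fst = \<rho>" using that unfolding couplings_def by auto
    have [measurable_cong]: "sets \<pi> = sets (borel \<Otimes>\<^sub>M borel)" by (fact sp1)
    have "AE y in distr \<pi> borel snd. y = x" unfolding d1 by (simp add: AE_return)
    then have ae: "AE p in \<pi>. snd p = x"
      by (subst (asm) AE_distr_iff) auto
    have "(\<integral>\<^sup>+ p. ennreal (norm (fst p - snd p)) \<partial>\<pi>) = (\<integral>\<^sup>+ p. ennreal (norm (fst p - x)) \<partial>\<pi>)"
      by (rule nn_integral_cong_AE) (use ae in auto)
    also have "\<dots> = (\<integral>\<^sup>+ z. ennreal (norm (z - x)) \<partial>(distr \<pi> borel fst))"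
      by (subst nn_integral_distr) auto
    finally show ?thesis unfolding d2 .
  qed
  define \<pi>0 where "\<pi>0 = distr \<rho> (borel \<Otimes>\<^sub>M borel) (\<lambda>z. (z, x))"
  have "\<pi>0 \<in> couplings \<rho> (return borel x)"
    unfolding couplings_def
  proof (intro CollectI conjI)
    show "sets \<pi>0 = sets (borel \<Otimes>\<^sub>M borel)" unfolding \<pi>0_def by simp
    show "prob_space \<pi>0" unfolding \<pi>0_def by (rule prob_space.prob_space_distr[OF p]) auto
    have "distr \<pi>0 borel snd = distr \<rho> borel (\<lambda>z. x)" unfolding \<pi>0_def
      by (subst distr_distr) (auto simp: comp_def)
    also have "\<dots> = return borel x" by (rule prob_space.distr_const[OF p]) auto
    finally show "distr \<pi>0 borel snd = return borel x" .
    have "distr \<pi>0 borel fst = distr \<rho> borel (\<lambda>z. z)" unfolding \<pi>0_def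
      by (subst distr_distr) (auto simp: comp_def)
    also have "\<dots> = \<rho>" by (rule distr_id2) (simp add: s)
    finally show "distr \<pi>0 borel fst = \<rho>" .
  qed
  then show ?thesis unfolding W1_dist_def
    by (subst INF_cong[OF refl val]) (auto simp: INF_constant)
qed


lemma AE_const_return:
  fixes M :: "'a::{real_normed_vector, second_countable_topology} measure"
  assumes s: "sets M = sets borel" and p: "prob_space M" and ae: "AE y in M. y = c"
  shows "M = return borel c"
proof (rule measure_eqI)
  show "sets M = sets (return borel c)" using s by simp
  fix A assume A: "A \<in> sets M"
  have sp: "space M = UNIV" using sets_eq_imp_space_eq[OF s] by simp
  show "emeasure M A = emeasure (return borel c) A"
  proof (cases "c \<in> A")
    case True
    have "emeasure M A = emeasure M (space M)"
      by (rule emeasure_eq_AE) (use ae True A in \<open>auto simp: sp[symmetric]\<close>)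
    then show ?thesis using True A s p by (simp add: prob_space.emeasure_space_1)
  next
    case False
    have "emeasure M A = emeasure M {}"
      by (rule emeasure_eq_AE) (use ae False A in auto)
    then show ?thesis using False A s by simp
  qed
qed

lemma norm_add_eq_inner:
  fixes u w :: "'a::real_inner"
  assumes "norm (u + w) = norm u + norm w"
  shows "inner u w = norm u * norm w"
proof -
  have "(norm (u + w))^2 = (norm u + norm w)^2" using assms by simp
  then have "inner (u+w) (u+w) = norm u ^2 + 2 * norm u * norm w + norm w ^2"
    by (simp add: power2_norm_eq_inner power2_sum)
  then show ?thesis by (simp add: inner_add power2_norm_eq_inner inner_commute)
qed


lemma forward_dir:
  fixes \<nu> :: "'a::{real_normed_vector, second_countable_topology} measure"
  assumes nu: "\<nu> \<in> W1_space"
  shows "\<exists>\<eta>\<in>W1_space. W1_dist (return borel x) \<nu> = W1_dist \<nu> \<eta> \<and>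
            W1_dist \<nu> \<eta> = W1_dist (return borel x) \<eta> / 2"
proof -
  have s: "sets \<nu> = sets borel" and p: "prob_space \<nu>"
    and fin: "(\<integral>\<^sup>+ x. ennreal (norm x) \<partial>\<nu>) < \<infinity>" using nu unfolding W1_space_def by auto
  have [measurable_cong]: "sets \<nu> = sets borel" by (fact s)
  have sp: "space \<nu> = UNIV" using sets_eq_imp_space_eq[OF s] by simp
  define T where "T = (\<lambda>y::'a. y + (y - x))"
  have T_meas[measurable]: "T \<in> borel_measurable borel" unfolding T_def by measurable
  define \<eta> where "\<eta> = distr \<nu> borel T"
  define d where "d = (\<integral>\<^sup>+ y. ennreal (norm (x - y)) \<partial>\<nu>)"
  have sh: "sets \<eta> = sets borel" unfolding \<eta>_def by simp
  have ph: "prob_space \<eta>" unfolding \<eta>_def by (rule prob_space.prob_space_distr[OF p]) auto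
  have d_fin: "d < \<infinity>"
  proof -
    have "d \<le> (\<integral>\<^sup>+ y. ennreal (norm x) + ennreal (norm y) \<partial>\<nu>)"
      unfolding d_def by (intro nn_integral_mono) (simp add: norm_triangle_ineq4 flip: ennreal_plus)
    also have "\<dots> = ennreal (norm x) + (\<integral>\<^sup>+ y. ennreal (norm y) \<partial>\<nu>)"
      by (subst nn_integral_add) (auto simp: prob_space.emeasure_space_1[OF p])
    also have "\<dots> < \<infinity>" using fin by (simp add: less_top)
    finally show ?thesis .
  qed
  have "\<eta> \<in> W1_space" unfolding W1_space_def
  proof (intro CollectI conjI sh ph)
    have "(\<integral>\<^sup>+ z. ennreal (norm z) \<partial>\<eta>) = (\<integral>\<^sup>+ y. ennreal (norm (T y)) \<partial>\<nu>)"
      unfolding \<eta>_def by (subst nn_integral_distr) auto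
    also have "\<dots> \<le> (\<integral>\<^sup>+ y. ennreal (norm x) + 2 * ennreal (norm (x - y)) \<partial>\<nu>)"
    proof (intro nn_integral_mono)
      fix y
      have "norm (T y) = norm (x - 2 *\<^sub>R (x - y))" unfolding T_def by (simp add: algebra_simps scaleR_2)
      also have "\<dots> \<le> norm x + 2 * norm (x - y)" using norm_triangle_ineq4[of x "2 *\<^sub>R (x - y)"] by simp
      finally show "ennreal (norm (T y)) \<le> ennreal (norm x) + 2 * ennreal (norm (x - y))"
        by (metis ennreal_leI ennreal_mult' ennreal_numeral ennreal_plus norm_ge_zero zero_le_numeral mult_nonneg_nonneg)
    qed
    also have "\<dots> = ennreal (norm x) + 2 * d"
      unfolding d_def by (subst nn_integral_add) (auto simp: nn_integral_cmult prob_space.emeasure_space_1[OF p])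
    also have "\<dots> < \<infinity>" using d_fin by (simp add: less_top ennreal_mult_eq_top_iff ennreal_mult_less_top)
    finally show "(\<integral>\<^sup>+ z. ennreal (norm z) \<partial>\<eta>) < \<infinity>" .
  qed
  have W_mu_nu: "W1_dist (return borel x) \<nu> = d" unfolding d_def by (rule W1_return_left[OF s p])
  have W_mu_eta: "W1_dist (return borel x) \<eta> = 2 * d"
  proof -
    have "W1_dist (return borel x) \<eta> = (\<integral>\<^sup>+ z. ennreal (norm (x - z)) \<partial>\<eta>)" by (rule W1_return_left[OF sh ph])
    also have "\<dots> = (\<integral>\<^sup>+ y. ennreal (norm (x - T y)) \<partial>\<nu>)"
      unfolding \<eta>_def by (subst nn_integral_distr) auto
    also have "\<dots> = (\<integral>\<^sup>+ y. 2 * ennreal (norm (x - y)) \<partial>\<nu>)"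
    proof (intro nn_integral_cong)
      fix y
      have "norm (x - T y) = 2 * norm (x - y)"
      proof -
        have "x - T y = 2 *\<^sub>R (x - y)" unfolding T_def by (simp add: algebra_simps scaleR_2)
        then show ?thesis by simp
      qed
      then show "ennreal (norm (x - T y)) = 2 * ennreal (norm (x - y))" by (simp add: ennreal_mult)
    qed
    also have "\<dots> = 2 * d" unfolding d_def by (simp add: nn_integral_cmult)
    finally show ?thesis .
  qed
  have W_nu_eta: "W1_dist \<nu> \<eta> = d"
  proof (rule antisym)
    define \<pi>1 where "\<pi>1 = distr \<nu> (borel \<Otimes>\<^sub>M borel) (\<lambda>y. (y, T y))"
    have "\<pi>1 \<in> couplings \<nu> \<eta>" unfolding couplings_def
    proof (intro CollectI conjI)
      show "sets \<pi>1 = sets (borel \<Otimes>\<^sub>M borel)" unfolding \<pi>1_def by simp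
      show "prob_space \<pi>1" unfolding \<pi>1_def by (rule prob_space.prob_space_distr[OF p]) auto
      have "distr \<pi>1 borel fst = distr \<nu> borel (\<lambda>z. z)" unfolding \<pi>1_def
        by (subst distr_distr) (auto simp: comp_def)
      also have "\<dots> = \<nu>" by (rule distr_id2) (simp add: s)
      finally show "distr \<pi>1 borel fst = \<nu>" .
      show "distr \<pi>1 borel snd = \<eta>" unfolding \<pi>1_def \<eta>_def
        by (subst distr_distr) (auto simp: comp_def)
    qed
    then have "W1_dist \<nu> \<eta> \<le> (\<integral>\<^sup>+ p. ennreal (norm (fst p - snd p)) \<partial>\<pi>1)"
      unfolding W1_dist_def by (rule INF_lower)
    also have "\<dots> = (\<integral>\<^sup>+ y. ennreal (norm (y - T y)) \<partial>\<nu>)"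
      unfolding \<pi>1_def by (subst nn_integral_distr) auto
    also have "\<dots> = d" unfolding d_def T_def by (simp add: norm_minus_commute)
    finally show "W1_dist \<nu> \<eta> \<le> d" .
  next
    show "d \<le> W1_dist \<nu> \<eta>" unfolding W1_dist_def
    proof (rule INF_greatest)
      fix \<pi> assume "\<pi> \<in> couplings \<nu> \<eta>"
      then have sp1: "sets \<pi> = sets (borel \<Otimes>\<^sub>M borel)" and d1: "distr \<pi> borel fst = \<nu>"
        and d2: "distr \<pi> borel snd = \<eta>" unfolding couplings_def by auto
      have [measurable_cong]: "sets \<pi> = sets (borel \<Otimes>\<^sub>M borel)" by (fact sp1)
      have "2 * d = (\<integral>\<^sup>+ z. ennreal (norm (x - z)) \<partial>\<eta>)"
        using W_mu_eta W1_return_left[OF sh ph] by simp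
      also have "\<dots> = (\<integral>\<^sup>+ p. ennreal (norm (x - snd p)) \<partial>\<pi>)"
        unfolding d2[symmetric] by (subst nn_integral_distr) auto
      also have "\<dots> \<le> (\<integral>\<^sup>+ p. ennreal (norm (fst p - snd p)) + ennreal (norm (x - fst p)) \<partial>\<pi>)"
      proof (intro nn_integral_mono)
        fix p :: "'a \<times> 'a"
        have "norm (x - snd p) \<le> norm (fst p - snd p) + norm (x - fst p)"
          using norm_triangle_ineq[of "fst p - snd p" "x - fst p"] by simp
        then show "ennreal (norm (x - snd p)) \<le> ennreal (norm (fst p - snd p)) + ennreal (norm (x - fst p))"
          by (simp add: ennreal_plus[symmetric] del: ennreal_plus)
      qed
      also have "\<dots> = (\<integral>\<^sup>+ p. ennreal (norm (fst p - snd p)) \<partial>\<pi>) + (\<integral>\<^sup>+ p. ennreal (norm (x - fst p)) \<partial>\<pi>)"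
        by (subst nn_integral_add) auto
      also have "(\<integral>\<^sup>+ p. ennreal (norm (x - fst p)) \<partial>\<pi>) = d"
        unfolding d_def d1[symmetric] by (subst nn_integral_distr) auto
      finally have "d + d \<le> (\<integral>\<^sup>+ p. ennreal (norm (fst p - snd p)) \<partial>\<pi>) + d"
        by (simp add: mult_2)
      then have "d + d \<le> d + (\<integral>\<^sup>+ p. ennreal (norm (fst p - snd p)) \<partial>\<pi>)"
        by (simp only: add.commute)
      then show "d \<le> (\<integral>\<^sup>+ p. ennreal (norm (fst p - snd p)) \<partial>\<pi>)"
        using d_fin by (auto simp: ennreal_add_left_cancel_le)
    qed
  qed
  have "2 * d / 2 = d" by (subst mult.commute) (rule ennreal_mult_divide_eq; simp)
  note h2 = this
  show ?thesis
  proof (intro bexI[of _ \<eta>] conjI)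
    show "W1_dist (return borel x) \<nu> = W1_dist \<nu> \<eta>" unfolding W_mu_nu W_nu_eta ..
    show "W1_dist \<nu> \<eta> = W1_dist (return borel x) \<eta> / 2" unfolding W_nu_eta W_mu_eta h2 ..
  qed (fact \<open>\<eta> \<in> W1_space\<close>)
qed


lemma cs_eq:
  fixes u w :: "'a::real_inner"
  assumes "inner u w = norm u * norm w" "w \<noteq> 0"
  shows "u = (norm u / norm w) *\<^sub>R w"
proof -
  define k where "k = norm u / norm w"
  have nw: "norm w > 0" using assms by simp
  have "inner (u - k *\<^sub>R w) (u - k *\<^sub>R w) = inner u u - 2 * k * inner u w + k^2 * inner w w"
    by (simp add: inner_diff inner_commute power2_eq_square algebra_simps)
  also have "\<dots> = norm u ^2 - 2 * k * (norm u * norm w) + k^2 * norm w ^2"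
    using assms by (simp add: power2_norm_eq_inner)
  also have "\<dots> = 0" unfolding k_def using nw by (simp add: field_simps power2_eq_square)
  finally have "u - k *\<^sub>R w = 0" by simp
  then show ?thesis unfolding k_def by simp
qed

lemma ray_unique:
  fixes w1 w2 f y y' :: "'a::real_inner"
  assumes w1: "w1 \<noteq> 0" and w2: "w2 \<noteq> 0" and f: "f \<noteq> 0" and fw: "inner f w1 = 0"
    and r1: "inner y w1 = norm y * norm w1" and r1': "inner y' w1 = norm y' * norm w1"
    and r2: "inner (y - f) w2 = norm (y - f) * norm w2"
    and r2': "inner (y' - f) w2 = norm (y' - f) * norm w2"
  shows "y = y'"
proof -
  obtain a where a: "y = a *\<^sub>R w1" using cs_eq[OF r1 w1] by blast
  obtain a' where a': "y' = a' *\<^sub>R w1" using cs_eq[OF r1' w1] by blast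
  obtain b where b: "y - f = b *\<^sub>R w2" using cs_eq[OF r2 w2] by blast
  obtain b' where b': "y' - f = b' *\<^sub>R w2" using cs_eq[OF r2' w2] by blast
  have ff: "inner f f \<noteq> 0" using f by simp
  have "inner (y - f) f = - inner f f" using a fw by (simp add: inner_diff_left inner_diff_right inner_commute)
  then have e1: "b * inner w2 f = - inner f f" using b by simp
  have "inner (y' - f) f = - inner f f" using a' fw by (simp add: inner_diff_left inner_diff_right inner_commute)
  then have e2: "b' * inner w2 f = - inner f f" using b' by simp
  have "inner w2 f \<noteq> 0" using e1 ff by auto
  then have "b = b'" using e1 e2 by (metis mult_right_cancel)
  then have "y - f = y' - f" using b b' by simp
  then show ?thesis by simp
qed


lemma ray_exists:
  fixes \<mu> :: "'a::{real_inner, second_countable_topology} measure"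
  assumes mu: "\<mu> \<in> W1_space" and nd: "\<not> (\<exists>x. \<mu> = return borel x)"
    and H: "\<forall>\<nu>\<in>W1_space. \<nu> \<noteq> \<mu> \<longrightarrow> (\<exists>\<eta>\<in>W1_space. W1_dist \<mu> \<nu> = W1_dist \<nu> \<eta> \<and>
            W1_dist \<nu> \<eta> = W1_dist \<mu> \<eta> / 2)"
  shows "\<exists>w. w \<noteq> 0 \<and> (AE y in \<mu>. inner (y - x) w = norm (y - x) * norm w)"
proof -
  have s: "sets \<mu> = sets borel" and p: "prob_space \<mu>"
    and fin: "(\<integral>\<^sup>+ x. ennreal (norm x) \<partial>\<mu>) < \<infinity>" using mu unfolding W1_space_def by blast+
  have [measurable_cong]: "sets \<mu> = sets borel" by (fact s)
  have spm: "space \<mu> = UNIV" using sets_eq_imp_space_eq[OF s] by simp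
  define a where "a = (\<integral>\<^sup>+ y. ennreal (norm (y - x)) \<partial>\<mu>)"
  have a_fin: "a < \<infinity>"
  proof -
    have "a \<le> (\<integral>\<^sup>+ y. ennreal (norm y) + ennreal (norm x) \<partial>\<mu>)"
      unfolding a_def by (intro nn_integral_mono) (simp add: norm_triangle_ineq4 flip: ennreal_plus)
    also have "\<dots> = (\<integral>\<^sup>+ y. ennreal (norm y) \<partial>\<mu>) + ennreal (norm x)"
      by (subst nn_integral_add) (auto simp: prob_space.emeasure_space_1[OF p])
    also have "\<dots> < \<infinity>" using fin by (simp add: less_top)
    finally show ?thesis .
  qed
  have a_pos: "a \<noteq> 0"
  proof
    assume "a = 0"
    then have "AE y in \<mu>. ennreal (norm (y - x)) = 0" unfolding a_def
      by (subst (asm) nn_integral_0_iff_AE) auto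
    then have "AE y in \<mu>. y = x" by simp
    then have "\<mu> = return borel x" by (rule AE_const_return[OF s p])
    then show False using nd by blast
  qed
  define \<nu> where "\<nu> = return borel x"
  have nuW: "\<nu> \<in> W1_space" unfolding W1_space_def \<nu>_def
    by (auto simp: prob_space_return nn_integral_return)
  have "\<nu> \<noteq> \<mu>" using nd unfolding \<nu>_def by metis
  with H nuW obtain \<eta> where eta: "\<eta> \<in> W1_space"
    and E1: "W1_dist \<mu> \<nu> = W1_dist \<nu> \<eta>" and E2: "W1_dist \<nu> \<eta> = W1_dist \<mu> \<eta> / 2" by blast
  have sh: "sets \<eta> = sets borel" and ph: "prob_space \<eta>" using eta unfolding W1_space_def by auto
  have [measurable_cong]: "sets \<eta> = sets borel" by (fact sh)
  have sph: "space \<eta> = UNIV" using sets_eq_imp_space_eq[OF sh] by simp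
  have W1: "W1_dist \<mu> \<nu> = a" unfolding \<nu>_def W1_return_right[OF s p] a_def ..
  have W2: "W1_dist \<nu> \<eta> = (\<integral>\<^sup>+ z. ennreal (norm (x - z)) \<partial>\<eta>)" unfolding \<nu>_def W1_return_left[OF sh ph] ..
  have b_eq: "(\<integral>\<^sup>+ z. ennreal (norm (x - z)) \<partial>\<eta>) = a"
    using W2[symmetric] E1[symmetric] W1 by (rule trans[OF trans])
  have W3: "W1_dist \<mu> \<eta> = 2 * a"
  proof -
    have h: "W1_dist \<mu> \<eta> / 2 = a"
      using E2[symmetric] E1[symmetric] W1 by (rule trans[OF trans])
    have "2 * (W1_dist \<mu> \<eta> / 2) = W1_dist \<mu> \<eta>"
      unfolding ennreal_times_divide by (subst mult.commute) (rule ennreal_mult_divide_eq; simp)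
    then show ?thesis using h by simp
  qed
  interpret pp: pair_prob_space \<mu> \<eta> unfolding pair_prob_space_def pair_sigma_finite_def
    using p ph by (simp add: prob_space_imp_sigma_finite)
  define P where "P = \<mu> \<Otimes>\<^sub>M \<eta>"
  have sP: "sets P = sets (borel \<Otimes>\<^sub>M borel)" unfolding P_def using s sh by (intro sets_pair_measure_cong)
  have [measurable_cong]: "sets P = sets (borel \<Otimes>\<^sub>M borel)" by (fact sP)
  have dfst: "distr P borel fst = \<mu>"
  proof -
    have "distr P borel fst = distr P \<mu> fst" by (rule distr_cong) (auto simp: s)
    also have "\<dots> = \<mu>" unfolding P_def by (rule prob_space.distr_pair_fst[OF ph])
    finally show ?thesis .
  qed
  have dsnd: "distr P borel snd = \<eta>"
  proof (rule measure_eqI)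
    show "sets (distr P borel snd) = sets \<eta>" using sh by simp
    fix X assume X: "X \<in> sets (distr P borel snd)"
    then have Xs: "X \<in> sets \<eta>" using sh by simp
    have "emeasure (distr P borel snd) X = emeasure P (space \<mu> \<times> X)"
      using X unfolding P_def by (subst emeasure_distr) (auto simp: space_pair_measure spm sph intro!: arg_cong2[where f=emeasure])
    also have "\<dots> = emeasure \<eta> X" unfolding P_def using Xs
      by (simp add: pp.M2.emeasure_pair_measure_Times pp.M1.emeasure_space_1)
    finally show "emeasure (distr P borel snd) X = emeasure \<eta> X" .
  qed
  have coup: "P \<in> couplings \<mu> \<eta>" unfolding couplings_def
    using sP dfst dsnd by (auto simp: P_def prob_space_pair p ph)
  define D where "D = (\<lambda>p::'a\<times>'a. norm (fst p - snd p))"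
  define g where "g = (\<lambda>p::'a\<times>'a. norm (fst p - x) + norm (x - snd p) - norm (fst p - snd p))"
  have g_nn: "g p \<ge> 0" for p unfolding g_def using norm_triangle_ineq[of "fst p - x" "x - snd p"] by simp
  have Dge: "2 * a \<le> (\<integral>\<^sup>+ p. ennreal (D p) \<partial>P)"
    unfolding W3[symmetric] W1_dist_def D_def by (rule INF_lower[OF coup])
  have G: "(\<integral>\<^sup>+ p. ennreal (norm (fst p - x) + norm (x - snd p)) \<partial>P) = 2 * a"
  proof -
    have "(\<integral>\<^sup>+ p. ennreal (norm (fst p - x) + norm (x - snd p)) \<partial>P) =
       (\<integral>\<^sup>+ p. ennreal (norm (fst p - x)) \<partial>P) + (\<integral>\<^sup>+ p. ennreal (norm (x - snd p)) \<partial>P)"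
      by (subst nn_integral_add[symmetric]) (auto simp: ennreal_plus)
    also have "(\<integral>\<^sup>+ p. ennreal (norm (fst p - x)) \<partial>P) = a"
      unfolding a_def dfst[symmetric] by (subst nn_integral_distr) auto
    also have "(\<integral>\<^sup>+ p. ennreal (norm (x - snd p)) \<partial>P) = a"
      unfolding b_eq[symmetric] dsnd[symmetric] by (subst nn_integral_distr) auto
    finally show ?thesis by (simp add: mult_2)
  qed
  have "(\<integral>\<^sup>+ p. ennreal (norm (fst p - x) + norm (x - snd p)) \<partial>P) =
        (\<integral>\<^sup>+ p. ennreal (D p) + ennreal (g p) \<partial>P)"
  proof (intro nn_integral_cong)
    fix p :: "'a \<times> 'a"
    have "norm (fst p - x) + norm (x - snd p) = D p + g p" unfolding D_def g_def by simp
    then show "ennreal (norm (fst p - x) + norm (x - snd p)) = ennreal (D p) + ennreal (g p)"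
      using g_nn[of p] by (simp add: D_def ennreal_plus)
  qed
  also have "\<dots> = (\<integral>\<^sup>+ p. ennreal (D p) \<partial>P) + (\<integral>\<^sup>+ p. ennreal (g p) \<partial>P)"
    by (subst nn_integral_add) (auto simp: D_def g_def)
  finally have sum: "(\<integral>\<^sup>+ p. ennreal (D p) \<partial>P) + (\<integral>\<^sup>+ p. ennreal (g p) \<partial>P) = 2 * a"
    using G by simp
  have twoa_fin: "2 * a \<noteq> \<infinity>" using a_fin by (simp add: ennreal_mult_eq_top_iff)
  have "(\<integral>\<^sup>+ p. ennreal (D p) \<partial>P) + (\<integral>\<^sup>+ p. ennreal (g p) \<partial>P) \<le> (\<integral>\<^sup>+ p. ennreal (D p) \<partial>P) + 0"
    using sum Dge by simp
  moreover have "(\<integral>\<^sup>+ p. ennreal (D p) \<partial>P) \<noteq> \<infinity>"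
  proof
    assume "(\<integral>\<^sup>+ p. ennreal (D p) \<partial>P) = \<infinity>"
    then have "(\<integral>\<^sup>+ p. ennreal (D p) \<partial>P) + (\<integral>\<^sup>+ p. ennreal (g p) \<partial>P) = \<infinity>" by simp
    then show False using sum twoa_fin by simp
  qed
  ultimately have "(\<integral>\<^sup>+ p. ennreal (g p) \<partial>P) \<le> 0"
    by (simp add: ennreal_add_left_cancel_le)
  then have "(\<integral>\<^sup>+ p. ennreal (g p) \<partial>P) = 0" by simp
  then have "AE p in P. ennreal (g p) = 0"
    by (subst (asm) nn_integral_0_iff_AE) (auto simp: g_def)
  then have "AE p in P. inner (fst p - x) (x - snd p) = norm (fst p - x) * norm (x - snd p)"
  proof (rule eventually_mono)
    fix p assume "ennreal (g p) = 0"
    then have "g p = 0" using g_nn[of p] by simp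
    then have "norm ((fst p - x) + (x - snd p)) = norm (fst p - x) + norm (x - snd p)"
      unfolding g_def by simp
    then show "inner (fst p - x) (x - snd p) = norm (fst p - x) * norm (x - snd p)"
      by (rule norm_add_eq_inner)
  qed
  then have "AE y in \<mu>. AE z in \<eta>. inner (y - x) (x - z) = norm (y - x) * norm (x - z)"
    using pp.AE_pair[of "\<lambda>p. inner (fst p - x) (x - snd p) = norm (fst p - x) * norm (x - snd p)"]
    unfolding P_def by simp
  then have AEz: "AE z in \<eta>. AE y in \<mu>. inner (y - x) (x - z) = norm (y - x) * norm (x - z)"
    by (subst (asm) pp.AE_commute) auto
  show ?thesis
  proof (rule ccontr)
    assume nw: "\<not> ?thesis"
    have "AE z in \<eta>. z = x"
      using AEz
    proof (rule eventually_mono)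
      fix z assume hz: "AE y in \<mu>. inner (y - x) (x - z) = norm (y - x) * norm (x - z)"
      from nw have "x - z = 0 \<or> \<not> (AE y in \<mu>. inner (y - x) (x - z) = norm (y - x) * norm (x - z))"
        by blast
      with hz show "z = x" by simp
    qed
    then have "(\<integral>\<^sup>+ z. ennreal (norm (x - z)) \<partial>\<eta>) = (\<integral>\<^sup>+ z. 0 \<partial>\<eta>)"
      by (intro nn_integral_cong_AE) auto
    then have "a = 0" using b_eq by simp
    then show False using a_pos by simp
  qed
qed


theorem lemma3p5:
  fixes \<mu> :: "'a::{real_inner, complete_space, second_countable_topology} measure"
  assumes dim2: "\<exists>u v :: 'a. independent {u, v} \<and> u \<noteq> v"
    and mu: "\<mu> \<in> W1_space"
  shows "(\<exists>x. \<mu> = return borel x) \<longleftrightarrow>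
         (\<forall>\<nu>\<in>W1_space. \<nu> \<noteq> \<mu> \<longrightarrow>
            (\<exists>\<eta>\<in>W1_space. W1_dist \<mu> \<nu> = W1_dist \<nu> \<eta> \<and>
                            W1_dist \<nu> \<eta> = W1_dist \<mu> \<eta> / 2))"
proof
  assume "\<exists>x. \<mu> = return borel x"
  then obtain x where x: "\<mu> = return borel x" by blast
  show "\<forall>\<nu>\<in>W1_space. \<nu> \<noteq> \<mu> \<longrightarrow>
            (\<exists>\<eta>\<in>W1_space. W1_dist \<mu> \<nu> = W1_dist \<nu> \<eta> \<and>
                            W1_dist \<nu> \<eta> = W1_dist \<mu> \<eta> / 2)"
    unfolding x using forward_dir by blast
next
  assume H: "\<forall>\<nu>\<in>W1_space. \<nu> \<noteq> \<mu> \<longrightarrow>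
            (\<exists>\<eta>\<in>W1_space. W1_dist \<mu> \<nu> = W1_dist \<nu> \<eta> \<and>
                            W1_dist \<nu> \<eta> = W1_dist \<mu> \<eta> / 2)"
  show "\<exists>x. \<mu> = return borel x"
  proof (rule ccontr)
    assume nd: "\<not> (\<exists>x. \<mu> = return borel x)"
    have s: "sets \<mu> = sets borel" and p: "prob_space \<mu>" using mu unfolding W1_space_def by blast+
    obtain u v :: 'a where ind: "independent {u, v}" and uv: "u \<noteq> v" using dim2 by blast
    obtain w1 where w1: "w1 \<noteq> 0" and A1: "AE y in \<mu>. inner (y - 0) w1 = norm (y - 0) * norm w1"
      using ray_exists[OF mu nd H, of 0] by blast
    define f1 where "f1 = u - (inner u w1 / inner w1 w1) *\<^sub>R w1"
    define f2 where "f2 = v - (inner v w1 / inner w1 w1) *\<^sub>R w1"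
    have ww: "inner w1 w1 \<noteq> 0" using w1 by simp
    have o1: "inner f1 w1 = 0" unfolding f1_def using ww by (simp add: inner_diff_left)
    have o2: "inner f2 w1 = 0" unfolding f2_def using ww by (simp add: inner_diff_left)
    have "f1 \<noteq> 0 \<or> f2 \<noteq> 0"
    proof (rule ccontr)
      assume "\<not> (f1 \<noteq> 0 \<or> f2 \<noteq> 0)"
      then have "u \<in> span {w1}" "v \<in> span {w1}" unfolding f1_def f2_def
        by (auto simp: span_singleton)
      then have "{u, v} \<subseteq> span {w1}" by auto
      from independent_span_bound[OF _ ind this] have "card {u, v} \<le> card {w1}" by simp
      then show False using uv by simp
    qed
    then obtain f where f: "f \<noteq> 0" and fo: "inner f w1 = 0" using o1 o2 by blast
    obtain w2 where w2: "w2 \<noteq> 0" and A2: "AE y in \<mu>. inner (y - f) w2 = norm (y - f) * norm w2"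
      using ray_exists[OF mu nd H, of f] by blast
    define Q where "Q = (\<lambda>y. inner y w1 = norm y * norm w1 \<and> inner (y - f) w2 = norm (y - f) * norm w2)"
    have AQ: "AE y in \<mu>. Q y" using A1 A2 unfolding Q_def by eventually_elim simp
    have "\<exists>y0. Q y0"
    proof (rule ccontr)
      assume "\<not> (\<exists>y0. Q y0)"
      then have "AE y in \<mu>. False" using AQ by simp
      then show False using prob_space.AE_False[OF p] by simp
    qed
    then obtain y0 where y0: "Q y0" by blast
    have "AE y in \<mu>. y = y0" using AQ
    proof (rule eventually_mono)
      fix y assume "Q y"
      then show "y = y0" using y0 unfolding Q_def by (intro ray_unique[OF w1 w2 f fo]) auto
    qed
    then have "\<mu> = return borel y0" by (rule AE_const_return[OF s p])
    then show False using nd by blast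
  qed
qed

end
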